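(* Let $p$ be a prime. If $B\subset\mathbf{Z}/p\mathbf{Z}$ is balanced, then $|B|\geqslant\log_2 p+1$.
   Context: A subset $B$ of an abelian group is balanced if for every $b\in B$ there exist distinct $b_1,b_2\in B$ with $2b=b_1+b_2$. *)

theory Defs
  imports Complex_Main "HOL-Computational_Algebra.Primes"
begin

text \<open>Z/pZ is represented by the canonical residues {0..<p} of int, with the group
  operation being addition modulo p. A subset B of Z/pZ is balanced if for every
  b in B there are distinct b1, b2 in B with 2b = b1 + b2 in Z/pZ.\<close>

definition balanced_mod :: "int \<Rightarrow> int set \<Rightarrow> bool" where
  "balanced_mod p B \<longleftrightarrow>
     (\<forall>b\<in>B. \<exists>b1\<in>B. \<exists>b2\<in>B. b1 \<noteq> b2 \<and> (2 * b) mod p = (b1 + b2) mod p)"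

end

theory Submission
  imports Defs
begin

lemma sum_topple:
  fixes z :: "int \<Rightarrow> int" and f :: "int \<Rightarrow> int"
  assumes "finite V" "v \<in> V" "a \<in> V" "b \<in> V"
  shows "(\<Sum>w\<in>V. (z w - (if w = v then 2 else 0) + (if w = a then 1 else 0) + (if w = b then 1 else 0)) * f w)
       = (\<Sum>w\<in>V. z w * f w) - 2 * f v + f a + f b"
proof -
  have pt: "\<And>w. (z w - (if w = v then 2 else 0) + (if w = a then 1 else 0) + (if w = b then 1 else 0)) * f w
     = z w * f w - (if w = v then 2 * f w else 0) + (if w = a then f w else 0) + (if w = b then f w else 0)"
    by (simp add: algebra_simps)
  have "(\<Sum>w\<in>V. (z w - (if w = v then 2 else 0) + (if w = a then 1 else 0) + (if w = b then 1 else 0)) * f w)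
     = (\<Sum>w\<in>V. z w * f w) - (\<Sum>w\<in>V. (if w = v then 2 * f w else 0)) + (\<Sum>w\<in>V. (if w = a then f w else 0)) + (\<Sum>w\<in>V. (if w = b then f w else 0))"
    unfolding pt by (simp add: sum.distrib sum_subtractf)
  also have "\<dots> = (\<Sum>w\<in>V. z w * f w) - 2 * f v + f a + f b"
    using assms by (simp add: sum.delta')
  finally show ?thesis .
qed

lemma chip:
  fixes p :: int and V :: "int set" and r g :: int and c1 c2 h z0 :: "int \<Rightarrow> int"
  assumes fin: "finite V" and rV: "r \<in> V"
    and cl: "\<forall>v\<in>V. c1 v \<in> V \<and> c2 v \<in> V"
    and ds: "\<forall>v\<in>V. c1 v \<noteq> v \<and> c2 v \<noteq> v"
    and rel: "\<forall>v\<in>V. p dvd (2*v - c1 v - c2 v)"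
    and hnn: "\<forall>v\<in>V. h v \<ge> 0"
    and hdec: "\<forall>v\<in>V-{r}. h (c1 v) + h (c2 v) < 2 * h v"
    and z0nn: "\<forall>w. z0 w \<ge> 0"
    and z0g: "(\<Sum>w\<in>V. z0 w * (w - r)) mod p = g"
  shows "\<exists>S\<subseteq>V-{r}. (\<Sum>v\<in>S. (v - r)) mod p = g"
proof -
  define P where "P z \<longleftrightarrow> (\<forall>w. z w \<ge> 0) \<and> (\<Sum>w\<in>V. z w * (w - r)) mod p = g" for z :: "int \<Rightarrow> int"
  define \<mu> where "\<mu> z = nat (\<Sum>w\<in>V. z w * h w)" for z :: "int \<Rightarrow> int"
  have "P z0" using z0nn z0g by (simp add: P_def)
  then obtain z where Pz: "P z" and zmin: "\<forall>y. P y \<longrightarrow> \<mu> z \<le> \<mu> y"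
    using ex_has_least_nat[of P z0 \<mu>] by blast
  have st: "z v \<le> 1" if vV: "v \<in> V - {r}" for v
  proof (rule ccontr)
    assume "\<not> z v \<le> 1"
    hence zv: "z v \<ge> 2" by simp
    define z' where "z' w = z w - (if w = v then 2 else 0) + (if w = c1 v then 1 else 0) + (if w = c2 v then 1 else 0)" for w
    have v: "v \<in> V" using vV by simp
    have c: "c1 v \<in> V" "c2 v \<in> V" "c1 v \<noteq> v" "c2 v \<noteq> v" using cl ds v by auto
    have nn: "\<forall>w. z' w \<ge> 0"
    proof
      fix w
      show "z' w \<ge> 0" using Pz zv c unfolding z'_def P_def
        by (cases "w = v") (auto simp: add_nonneg_nonneg)
    qed
    have s1: "(\<Sum>w\<in>V. z' w * (w - r)) = (\<Sum>w\<in>V. z w * (w - r)) - (2*v - c1 v - c2 v)"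
      unfolding z'_def using sum_topple[OF fin v c(1) c(2), of z "\<lambda>w. w - r"] by simp
    have "p dvd (2*v - c1 v - c2 v)" using rel v by auto
    hence "(\<Sum>w\<in>V. z' w * (w - r)) mod p = (\<Sum>w\<in>V. z w * (w - r)) mod p"
    proof -
      have "p dvd (c1 v + c2 v - 2*v)" using \<open>p dvd (2*v - c1 v - c2 v)\<close> dvd_minus_iff[of p "2*v - c1 v - c2 v"] by (simp add: algebra_simps)
      thus ?thesis unfolding s1 by (simp add: mod_eq_dvd_iff)
    qed
    hence Pz': "P z'" using nn Pz by (simp add: P_def)
    have s2: "(\<Sum>w\<in>V. z' w * h w) = (\<Sum>w\<in>V. z w * h w) - 2 * h v + h (c1 v) + h (c2 v)"
      unfolding z'_def using sum_topple[OF fin v c(1) c(2), of z h] by simp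
    have "(\<Sum>w\<in>V. z' w * h w) \<ge> 0" using nn hnn by (intro sum_nonneg) auto
    moreover have "h (c1 v) + h (c2 v) < 2 * h v" using hdec vV by auto
    ultimately have "\<mu> z' < \<mu> z" unfolding \<mu>_def s2 by linarith
    with zmin Pz' show False by auto
  qed
  define S where "S = {v \<in> V - {r}. z v = 1}"
  have "(\<Sum>w\<in>V. z w * (w - r)) = z r * (r - r) + (\<Sum>w\<in>V-{r}. z w * (w - r))"
    using fin rV by (simp add: sum.remove)
  also have "\<dots> = (\<Sum>w\<in>V-{r}. if z w = 1 then w - r else 0)"
  proof -
    have "\<And>w. w \<in> V-{r} \<Longrightarrow> z w * (w - r) = (if z w = 1 then w - r else 0)"
    proof -
      fix w assume "w \<in> V-{r}"
      hence "z w = 0 \<or> z w = 1" using st[of w] Pz unfolding P_def by (metis le_less zero_less_one_class.zero_le_one int_one_le_iff_zero_less le_antisym not_le)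
      thus "z w * (w - r) = (if z w = 1 then w - r else 0)" by auto
    qed
    hence "(\<Sum>w\<in>V-{r}. z w * (w - r)) = (\<Sum>w\<in>V-{r}. if z w = 1 then w - r else 0)"
      by (intro sum.cong) auto
    thus ?thesis by simp
  qed
  also have "\<dots> = (\<Sum>w\<in>S. w - r)"
    unfolding S_def using fin by (intro sum.inter_filter[symmetric]) auto
  finally have "(\<Sum>w\<in>S. w - r) mod p = g" using Pz unfolding P_def by simp
  moreover have "S \<subseteq> V - {r}" unfolding S_def by auto
  ultimately show ?thesis by blast
qed


lemma count:
  fixes p :: int and V :: "int set" and r u :: int and c1 c2 h :: "int \<Rightarrow> int"
  assumes pr: "prime p" and Vp: "V \<subseteq> {0..<p}" and fin: "finite V" and rV: "r \<in> V"
    and uV: "u \<in> V" "u \<noteq> r"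
    and cl: "\<forall>v\<in>V. c1 v \<in> V \<and> c2 v \<in> V"
    and ds: "\<forall>v\<in>V. c1 v \<noteq> v \<and> c2 v \<noteq> v"
    and rel: "\<forall>v\<in>V. p dvd (2*v - c1 v - c2 v)"
    and hnn: "\<forall>v\<in>V. h v \<ge> 0"
    and hdec: "\<forall>v\<in>V-{r}. h (c1 v) + h (c2 v) < 2 * h v"
  shows "nat p \<le> 2 ^ (card V - 1)"
proof -
  have p0: "p > 0" using pr prime_gt_0_int by blast
  have ndvd: "\<not> p dvd (u - r)"
  proof
    assume "p dvd (u - r)"
    hence "u mod p = r mod p" by (simp add: mod_eq_dvd_iff)
    moreover have "u mod p = u" "r mod p = r" using Vp uV rV by auto
    ultimately show False using uV by simp
  qed
  have cop: "coprime p (u - r)" using pr ndvd by (simp add: prime_imp_coprime)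
  then have "gcd (u - r) p = 1" by (simp add: gcd.commute)
  then obtain s t where st: "s * (u - r) + t * p = 1" using bezout_int[of "u - r" p] by auto
  define f where "f S = (\<Sum>v\<in>S. (v - r)) mod p" for S
  have "{0..<p} \<subseteq> f ` Pow (V - {r})"
  proof
    fix g assume g: "g \<in> {0..<p}"
    define m where "m = (g * s) mod p"
    define z0 where "z0 w = (if w = u then m else 0)" for w
    have "(\<Sum>w\<in>V. z0 w * (w - r)) = m * (u - r)"
    proof -
      have "(\<Sum>w\<in>V. z0 w * (w - r)) = (\<Sum>w\<in>V. if w = u then m * (w - r) else 0)"
        unfolding z0_def by (intro sum.cong) auto
      thus ?thesis using fin uV by (simp add: sum.delta')
    qed
    hence "(\<Sum>w\<in>V. z0 w * (w - r)) mod p = (g * (s * (u - r))) mod p"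
      unfolding m_def by (simp add: mod_mult_left_eq mult.assoc)
    also have "\<dots> = (g * (1 - t * p)) mod p"
    proof -
      have "s * (u - r) = 1 - t * p" using st by linarith
      thus ?thesis by simp
    qed
    also have "\<dots> = (g + (- g * t) * p) mod p" by (simp add: algebra_simps)
    also have "\<dots> = g mod p" by (rule mod_mult_self1)
    also have "\<dots> = g" using g by simp
    finally have zg: "(\<Sum>w\<in>V. z0 w * (w - r)) mod p = g" .
    have "\<forall>w. z0 w \<ge> 0" unfolding z0_def m_def using p0 by simp
    then obtain S where "S \<subseteq> V - {r}" "(\<Sum>v\<in>S. (v - r)) mod p = g"
      using chip[OF fin rV cl ds rel hnn hdec _ zg] by blast
    thus "g \<in> f ` Pow (V - {r})" unfolding f_def by auto
  qed
  hence "card {0..<p} \<le> card (f ` Pow (V - {r}))" using fin by (intro card_mono) auto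
  also have "\<dots> \<le> card (Pow (V - {r}))" using fin by (intro card_image_le) auto
  also have "\<dots> = 2 ^ (card V - 1)" using fin rV by (simp add: card_Pow)
  finally show ?thesis by simp
qed


lemma hcon:
  fixes V :: "int set" and d :: "int \<Rightarrow> nat" and c1 c2 :: "int \<Rightarrow> int"
  assumes fin: "finite V"
    and cl: "\<forall>v\<in>V. c1 v \<in> V \<and> c2 v \<in> V"
    and dd: "\<forall>v\<in>V-{r}. d (c1 v) < d v \<or> d (c2 v) < d v"
  shows "\<exists>h. (\<forall>v\<in>V. h v \<ge> (0::int)) \<and> (\<forall>v\<in>V-{r}. h (c1 v) + h (c2 v) < 2 * h v)"
proof -
  define N where "N = Max (d ` V)"
  have dN: "d v \<le> N" if "v \<in> V" for v unfolding N_def using fin that by simp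
  define h where "h v = (2::int) ^ N - 2 ^ (N - d v)" for v
  have hnn: "h v \<ge> 0" if "v \<in> V" for v
    unfolding h_def using dN[OF that] by (simp add: power_increasing)
  have hub: "h v \<le> 2 ^ N - 1" if "v \<in> V" for v
  proof -
    have "(1::int) \<le> 2 ^ (N - d v)" by simp
    thus ?thesis unfolding h_def by linarith
  qed
  have key: "h a + h b < 2 * h v" if "a \<in> V" "b \<in> V" "v \<in> V" "d a < d v" for a b v
  proof -
    have "Suc (N - d v) \<le> N - d a" using that dN[of v] by linarith
    hence "(2::int) ^ (N - d a) \<ge> 2 ^ Suc (N - d v)"
      by (intro power_increasing) auto
    hence "h a \<le> 2 ^ N - 2 * 2 ^ (N - d v)" unfolding h_def by simp
    moreover have "h b \<le> 2 ^ N - 1" using hub that by simp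
    moreover have "2 * h v = 2 * 2 ^ N - 2 * 2 ^ (N - d v)" unfolding h_def by simp
    ultimately show ?thesis by linarith
  qed
  have "\<forall>v\<in>V-{r}. h (c1 v) + h (c2 v) < 2 * h v"
  proof
    fix v assume v: "v \<in> V - {r}"
    hence c: "c1 v \<in> V" "c2 v \<in> V" "v \<in> V" using cl by auto
    from dd v have "d (c1 v) < d v \<or> d (c2 v) < d v" by blast
    thus "h (c1 v) + h (c2 v) < 2 * h v"
      using key[OF c(1) c(2) c(3)] key[OF c(2) c(1) c(3)] by (auto simp: add.commute)
  qed
  thus ?thesis using hnn by blast
qed


theorem corollary4p4:
  fixes p :: int and B :: "int set"
  assumes "prime p"
    and "B \<subseteq> {0..<p}"
    and "B \<noteq> {}"
    and "balanced_mod p B"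
  shows "real (card B) \<ge> log 2 (real_of_int p) + 1"
proof -
  have pr: "prime p" and Bp: "B \<subseteq> {0..<p}" using assms by auto
  have p0: "p > 1" using pr prime_gt_1_int by blast
  have finB: "finite B" using Bp by (rule finite_subset) simp
  have eqm: "a = b" if "a \<in> B" "b \<in> B" "a mod p = b mod p" for a b
  proof -
    have "a mod p = a" "b mod p = b" using that Bp by auto
    thus ?thesis using that(3) by linarith
  qed
  have "\<forall>b\<in>B. \<exists>q. fst q \<in> B \<and> snd q \<in> B \<and> fst q \<noteq> snd q \<and> (2 * b) mod p = (fst q + snd q) mod p"
  proof
    fix b assume "b \<in> B"
    then obtain b1 b2 where "b1 \<in> B" "b2 \<in> B" "b1 \<noteq> b2" "(2 * b) mod p = (b1 + b2) mod p"
      using assms(4) unfolding balanced_mod_def by blast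
    thus "\<exists>q. fst q \<in> B \<and> snd q \<in> B \<and> fst q \<noteq> snd q \<and> (2 * b) mod p = (fst q + snd q) mod p"
      by (intro exI[of _ "(b1, b2)"]) simp
  qed
  from bchoice[OF this] obtain f where f: "\<forall>b\<in>B. fst (f b) \<in> B \<and> snd (f b) \<in> B \<and> fst (f b) \<noteq> snd (f b) \<and> (2 * b) mod p = (fst (f b) + snd (f b)) mod p"
    by blast
  define c1 where "c1 b = fst (f b)" for b
  define c2 where "c2 b = snd (f b)" for b
  have cB: "c1 b \<in> B" "c2 b \<in> B" "c1 b \<noteq> c2 b" "(2 * b) mod p = (c1 b + c2 b) mod p" if "b \<in> B" for b
    using f that unfolding c1_def c2_def by auto
  have rel: "p dvd (2*b - c1 b - c2 b)" if "b \<in> B" for b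
    using cB(4)[OF that] by (simp add: mod_eq_dvd_iff algebra_simps)
  have ne: "c1 b \<noteq> b \<and> c2 b \<noteq> b" if b: "b \<in> B" for b
  proof (rule ccontr)
    assume "\<not> (c1 b \<noteq> b \<and> c2 b \<noteq> b)"
    hence "c1 b = b \<or> c2 b = b" by blast
    thus False
    proof
      assume h: "c1 b = b"
      have "(b + b) mod p = (b + c2 b) mod p" using cB(4)[OF b] h by simp
      hence "p dvd ((b + b) - (b + c2 b))" by (simp only: mod_eq_dvd_iff)
      hence "b mod p = c2 b mod p" by (simp add: mod_eq_dvd_iff)
      hence "b = c2 b" using eqm cB b by blast
      thus False using h cB(3)[OF b] by simp
    next
      assume h: "c2 b = b"
      have "(b + b) mod p = (c1 b + b) mod p" using cB(4)[OF b] h by simp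
      hence "p dvd ((b + b) - (c1 b + b))" by (simp only: mod_eq_dvd_iff)
      hence "b mod p = c1 b mod p" by (simp add: mod_eq_dvd_iff)
      hence "b = c1 b" using eqm cB b by blast
      thus False using h cB(3)[OF b] by simp
    qed
  qed
  define E where "E = {(v, w). v \<in> B \<and> (w = c1 v \<or> w = c2 v)}"
  define reach where "reach r = {v. (r, v) \<in> E\<^sup>*}" for r
  have reachB: "reach r \<subseteq> B" if "r \<in> B" for r
  proof
    fix v assume "v \<in> reach r"
    hence "(r, v) \<in> E\<^sup>*" unfolding reach_def by simp
    thus "v \<in> B"
    proof (induction rule: rtrancl_induct)
      case base then show ?case using that .
    next
      case (step y z) then show ?case unfolding E_def using cB by auto
    qed
  qed
  obtain b0 where b0: "b0 \<in> B" using assms(3) by blast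
  obtain r where rB: "r \<in> B" and rmin: "\<forall>y. y \<in> B \<longrightarrow> card (reach r) \<le> card (reach y)"
    using ex_has_least_nat[of "\<lambda>y. y \<in> B" b0 "\<lambda>y. card (reach y)"] b0 by blast
  define V where "V = reach r"
  have VB: "V \<subseteq> B" unfolding V_def using reachB rB by simp
  have finV: "finite V" using VB finB finite_subset by blast
  have rV: "r \<in> V" unfolding V_def reach_def by simp
  have clV: "\<forall>v\<in>V. c1 v \<in> V \<and> c2 v \<in> V"
  proof
    fix v assume v: "v \<in> V"
    hence "v \<in> B" using VB by auto
    hence "(v, c1 v) \<in> E" "(v, c2 v) \<in> E" unfolding E_def by auto
    thus "c1 v \<in> V \<and> c2 v \<in> V" using v unfolding V_def reach_def
      by (auto intro: rtrancl.rtrancl_into_rtrancl)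
  qed
  have bk: "(v, r) \<in> E\<^sup>*" if v: "v \<in> V" for v
  proof -
    have sub: "reach v \<subseteq> V" using v unfolding V_def reach_def
      by (auto intro: rtrancl_trans)
    have "v \<in> B" using v VB by auto
    hence "card V \<le> card (reach v)" using rmin unfolding V_def by auto
    hence "reach v = V" using sub finV by (simp add: card_seteq)
    thus ?thesis using rV unfolding reach_def by auto
  qed
  define d where "d v = (LEAST n. (v, r) \<in> E ^^ n)" for v
  have dd: "\<forall>v\<in>V-{r}. d (c1 v) < d v \<or> d (c2 v) < d v"
  proof
    fix v assume v: "v \<in> V - {r}"
    obtain n where n: "(v, r) \<in> E ^^ n" using bk[of v] v rtrancl_power by blast
    have dn: "(v, r) \<in> E ^^ d v" unfolding d_def using n by (rule LeastI)
    have "d v \<noteq> 0"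
    proof
      assume "d v = 0"
      thus False using dn v by simp
    qed
    then obtain m where m: "d v = Suc m" using not0_implies_Suc by blast
    then obtain y where y: "(v, y) \<in> E" "(y, r) \<in> E ^^ m" using dn relpow_Suc_D2[of v r m E] by auto
    have "d y \<le> m" unfolding d_def using y(2) by (rule Least_le)
    moreover have "y = c1 v \<or> y = c2 v" using y(1) unfolding E_def by auto
    ultimately show "d (c1 v) < d v \<or> d (c2 v) < d v" using m by auto
  qed
  obtain h where hnn: "\<forall>v\<in>V. h v \<ge> (0::int)" and hdec: "\<forall>v\<in>V-{r}. h (c1 v) + h (c2 v) < 2 * h v"
    using hcon[OF finV clV dd] by blast
  have uV: "c1 r \<in> V" "c1 r \<noteq> r" using clV rV ne rB by auto
  have dsV: "\<forall>v\<in>V. c1 v \<noteq> v \<and> c2 v \<noteq> v" using ne VB by auto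
  have relV: "\<forall>v\<in>V. p dvd (2*v - c1 v - c2 v)" using rel VB by auto
  have "nat p \<le> 2 ^ (card V - 1)"
    using count[OF pr _ finV rV uV clV dsV relV hnn hdec] VB Bp by auto
  also have "\<dots> \<le> 2 ^ (card B - 1)"
    using card_mono[OF finB VB] by (intro power_increasing) auto
  finally have pb: "nat p \<le> 2 ^ (card B - 1)" .
  have cB1: "card B \<ge> 1" using finB assms(3) by (simp add: Suc_leI card_gt_0_iff)
  have "real_of_int p \<le> 2 ^ (card B - 1)"
  proof -
    have "real (nat p) \<le> real (2 ^ (card B - 1))" using pb by linarith
    thus ?thesis using p0 by simp
  qed
  hence "log 2 (real_of_int p) \<le> log 2 (2 ^ (card B - 1))"
    using p0 by (subst log_le_cancel_iff) auto
  also have "\<dots> = real (card B - 1)" by (simp add: log_nat_power)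
  also have "\<dots> = real (card B) - 1" using cB1 by simp
  finally show ?thesis by simp
qed

end
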